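(* Let $G=(V,E)$ be a connected undirected policy graph with $V=\mathcal{T}=\{v_1,\dots,v_k\}$ (no vertex $\bot$), and let $\mathbf{W}$ be a workload with $k$ columns. Fix a value $v=v_i\in V$. Let $G'=(V',E')$ with $V'=V\setminus\{v\}\cup\{\bot\}$ and $E'=E\setminus\{(v,u):u\in V\}\cup\{(\bot,u):(v,u)\in E\}$. For a database $\mathbf{x}\in\mathbb{R}^k$ let $\mathbf{x}_{-v}\in\mathbb{R}^{k-1}$ be $\mathbf{x}$ with the entry $\mathbf{x}[v]$ removed, and let $\mathbf{W}'=\mathbf{W}\mathbf{D}$ where $\mathbf{D}$ is the $k\times(k-1)$ matrix $$\mathbf{D}=\begin{pmatrix}\mathbf{I}_{i-1} & \mathbf{0}\\ -\mathbf{1}_{i-1}^\top & -\mathbf{1}_{k-i}^\top\\ \mathbf{0} & \mathbf{I}_{k-i}\end{pmatrix}$$ ($\mathbf{I}_j$ the $j\times j$ identity, $\mathbf{1}_j$ the all-ones vector of length $j$). Then: (i) $\mathbf{W}\mathbf{x}=\mathbf{W}'\mathbf{x}_{-v}+\mathbf{c}(\mathbf{W},n)$, where $n=\sum_{j}\mathbf{x}[j]$ is the database size and $\mathbf{c}(\mathbf{W},n)$ is a vector depending only on $\mathbf{W}$ and $n$; and (ii) any two databases $\mathbf{y},\mathbf{z}$ are neighbors under $G$ if and only if $\mathbf{y}_{-v}$ and $\mathbf{z}_{-v}$ are neighbors under $G'$.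
   Context: Databases are histogram vectors indexed by $\mathcal{T}$. Blowfish neighbors under a policy graph $H=(V_H,E_H)$, $V_H\subseteq\mathcal{T}\cup\{\bot\}$: two databases are neighbors iff they differ in the value of exactly one record, $u$ in one and $w$ in the other, with $(u,w)\in E_H$ (vector difference $\pm(\mathbf{e}_u-\mathbf{e}_w)$), or one is obtained from the other by adding a single record of value $u$ with $(u,\bot)\in E_H$ (vector difference $\pm\mathbf{e}_u$). Since $G$ has no $\bot$, neighbors under $G$ have the same size $n$. *)

theory Defs
  imports Complex_Main
begin

text \<open>The value domain is T = {0..<k} (0-based: v_j of the paper is j-1).
 A vector in R^d is a function nat => real of which only the entries p < d matter.
 A policy graph is a set of (ordered) edges between vertices of type nat option,
 where None plays the role of the special vertex bot and Some a the value a.\<close>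

definition unitv :: "nat \<Rightarrow> nat \<Rightarrow> real" where
  "unitv u p = (if p = u then 1 else 0)"

text \<open>Blowfish neighbours of two vectors y, z of length d whose coordinate p
 holds the count of the value lab p, under the policy graph with edge set H.\<close>
definition blowfish_nbr ::
  "(nat option \<times> nat option) set \<Rightarrow> nat \<Rightarrow> (nat \<Rightarrow> nat) \<Rightarrow> (nat \<Rightarrow> real) \<Rightarrow> (nat \<Rightarrow> real) \<Rightarrow> bool" where
  "blowfish_nbr H d lab y z \<longleftrightarrow>
     (\<exists>u w. u < d \<and> w < d \<and> u \<noteq> w \<and> (Some (lab u), Some (lab w)) \<in> H \<and>
        ((\<forall>p<d. y p - z p = unitv u p - unitv w p) \<or> (\<forall>p<d. z p - y p = unitv u p - unitv w p)))
   \<or> (\<exists>u. u < d \<and> (Some (lab u), None) \<in> H \<and>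
        ((\<forall>p<d. y p - z p = unitv u p) \<or> (\<forall>p<d. z p - y p = unitv u p)))"

definition graph_edges :: "(nat \<times> nat) set \<Rightarrow> (nat option \<times> nat option) set" where
  "graph_edges E = {(Some a, Some b) | a b. (a, b) \<in> E}"

definition collapse_edges :: "(nat \<times> nat) set \<Rightarrow> nat \<Rightarrow> (nat option \<times> nat option) set" where
  "collapse_edges E v =
     {(Some a, Some b) | a b. (a, b) \<in> E \<and> a \<noteq> v \<and> b \<noteq> v}
   \<union> {(None, Some u) | u. (v, u) \<in> E}
   \<union> {(Some u, None) | u. (v, u) \<in> E}"

text \<open>Position p of x_{-v} holds the count of value ins_idx v p.\<close>
definition ins_idx :: "nat \<Rightarrow> nat \<Rightarrow> nat" where
  "ins_idx v p = (if p < v then p else Suc p)"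

definition del_entry :: "nat \<Rightarrow> (nat \<Rightarrow> real) \<Rightarrow> nat \<Rightarrow> real" where
  "del_entry v x = (\<lambda>p. x (ins_idx v p))"

text \<open>The k x (k-1) matrix D (0-based row a, column b; v = i-1).\<close>
definition Dmat :: "nat \<Rightarrow> nat \<Rightarrow> nat \<Rightarrow> real" where
  "Dmat v a b = (if a < v then (if a = b then 1 else 0)
                 else if a = v then -1
                 else (if a = Suc b then 1 else 0))"

definition matmul :: "nat \<Rightarrow> (nat \<Rightarrow> nat \<Rightarrow> real) \<Rightarrow> (nat \<Rightarrow> nat \<Rightarrow> real) \<Rightarrow> nat \<Rightarrow> nat \<Rightarrow> real" where
  "matmul n A B = (\<lambda>r c. \<Sum>a<n. A r a * B a c)"

definition mulvec :: "nat \<Rightarrow> (nat \<Rightarrow> nat \<Rightarrow> real) \<Rightarrow> (nat \<Rightarrow> real) \<Rightarrow> nat \<Rightarrow> real" where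
  "mulvec n A x = (\<lambda>r. \<Sum>c<n. A r c * x c)"

end

theory Submission
  imports Defs
begin

definition del_idx :: "nat \<Rightarrow> nat \<Rightarrow> nat" where
  "del_idx v u = (if u < v then u else u - 1)"

lemma ins_ne: "ins_idx v p \<noteq> v" by (simp add: ins_idx_def)

lemma ins_del: "u \<noteq> v \<Longrightarrow> ins_idx v (del_idx v u) = u"
  by (auto simp: ins_idx_def del_idx_def)

lemma del_ins: "del_idx v (ins_idx v p) = p"
  by (auto simp: ins_idx_def del_idx_def)

lemma ins_eq_iff: "u \<noteq> v \<Longrightarrow> (ins_idx v p = u) = (p = del_idx v u)"
  by (auto simp: ins_idx_def del_idx_def)

lemma ins_lt: "v < k \<Longrightarrow> p < k - 1 \<Longrightarrow> ins_idx v p < k"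
  by (auto simp: ins_idx_def)

lemma del_lt: "v < k \<Longrightarrow> u < k \<Longrightarrow> u \<noteq> v \<Longrightarrow> del_idx v u < k - 1"
  by (auto simp: del_idx_def)

lemma ins_inj: "inj (ins_idx v)"
  by (rule injI) (metis del_ins)

lemma ins_bij: "v < k \<Longrightarrow> bij_betw (ins_idx v) {..<k-1} ({..<k} - {v})"
  unfolding bij_betw_def
proof
  show "inj_on (ins_idx v) {..<k - 1}" using ins_inj by (metis inj_on_subset subset_UNIV)
  assume vk: "v < k"
  show "ins_idx v ` {..<k - 1} = {..<k} - {v}"
  proof
    show "ins_idx v ` {..<k - 1} \<subseteq> {..<k} - {v}" using vk ins_lt ins_ne by auto
    show "{..<k} - {v} \<subseteq> ins_idx v ` {..<k - 1}"
    proof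
      fix j assume "j \<in> {..<k} - {v}"
      then have "j = ins_idx v (del_idx v j)" "del_idx v j < k - 1"
        using ins_del del_lt vk by auto
      then show "j \<in> ins_idx v ` {..<k - 1}" by blast
    qed
  qed
qed

lemma sum_split:
  assumes "v < k"
  shows "(\<Sum>j<k. f j) = f v + (\<Sum>p<k-1. f (ins_idx v p))"
proof -
  have "(\<Sum>j<k. f j) = f v + sum f ({..<k} - {v})"
    using assms by (simp add: sum.remove)
  also have "sum f ({..<k} - {v}) = (\<Sum>p<k-1. f (ins_idx v p))"
    using sum.reindex_bij_betw[OF ins_bij[OF assms], of f] by simp
  finally show ?thesis .
qed

lemma Dmat_ne: "a \<noteq> v \<Longrightarrow> Dmat v a b = (if ins_idx v b = a then 1 else 0)"
  by (auto simp: Dmat_def ins_idx_def)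

lemma inner_sum:
  assumes vk: "v < k" and ak: "a < k"
  shows "(\<Sum>b<k-1. Dmat v a b * x (ins_idx v b))
     = x a - (if a = v then (\<Sum>j<k. x j) else 0)"
proof (cases "a = v")
  case True
  then show ?thesis using sum_split[OF vk, of x]
    by (simp add: Dmat_def sum_negf)
next
  case False
  have "(\<Sum>b<k-1. Dmat v a b * x (ins_idx v b))
      = (\<Sum>b<k-1. (\<lambda>j. if j = a then x j else 0) (ins_idx v b))"
    using False by (intro sum.cong) (auto simp: Dmat_ne)
  also have "\<dots> = (\<Sum>j\<in>{..<k}-{v}. if j = a then x j else 0)"
    using sum.reindex_bij_betw[OF ins_bij[OF vk], of "\<lambda>j. if j = a then x j else 0"] by simp
  also have "\<dots> = x a" using False ak by (simp add: sum.delta')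
  finally show ?thesis using False by simp
qed

lemma part1:
  assumes vk: "v < k"
  shows "mulvec k W x r
     = mulvec (k - 1) (matmul k W (Dmat v)) (del_entry v x) r + (\<Sum>j<k. x j) * W r v"
proof -
  have "mulvec (k - 1) (matmul k W (Dmat v)) (del_entry v x) r
      = (\<Sum>b<k-1. \<Sum>a<k. W r a * Dmat v a b * x (ins_idx v b))"
    by (simp add: mulvec_def matmul_def del_entry_def sum_distrib_right)
  also have "\<dots> = (\<Sum>a<k. \<Sum>b<k-1. W r a * (Dmat v a b * x (ins_idx v b)))"
    by (subst sum.swap) (simp add: mult.assoc)
  also have "\<dots> = (\<Sum>a<k. W r a * (x a - (if a = v then (\<Sum>j<k. x j) else 0)))"
  proof (rule sum.cong[OF refl])
    fix a assume "a \<in> {..<k}"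
    then have "(\<Sum>b<k-1. W r a * (Dmat v a b * x (ins_idx v b)))
       = W r a * (\<Sum>b<k-1. Dmat v a b * x (ins_idx v b))" by (simp add: sum_distrib_left)
    then show "(\<Sum>b<k-1. W r a * (Dmat v a b * x (ins_idx v b)))
       = W r a * (x a - (if a = v then (\<Sum>j<k. x j) else 0))"
      using inner_sum[OF vk, of a x] \<open>a \<in> {..<k}\<close> by simp
  qed
  also have "\<dots> = (\<Sum>a<k. W r a * x a) - (\<Sum>a<k. if a = v then W r a * (\<Sum>j<k. x j) else 0)"
  proof -
    have "(\<Sum>a<k. W r a * (x a - (if a = v then (\<Sum>j<k. x j) else 0)))
       = (\<Sum>a<k. W r a * x a - (if a = v then W r a * (\<Sum>j<k. x j) else 0))"
      by (intro sum.cong) (auto simp: right_diff_distrib)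
    then show ?thesis by (simp only: sum_subtractf)
  qed
  also have "\<dots> = mulvec k W x r - (\<Sum>j<k. x j) * W r v"
    using vk by (simp add: mulvec_def sum.delta')
  finally show ?thesis by simp
qed

lemma ce_ss: "((Some a, Some b) \<in> collapse_edges E v) = ((a, b) \<in> E \<and> a \<noteq> v \<and> b \<noteq> v)"
  by (auto simp: collapse_edges_def)
lemma ce_sn: "((Some a, None) \<in> collapse_edges E v) = ((v, a) \<in> E)"
  by (auto simp: collapse_edges_def)
lemma ge_ss: "((Some a, Some b) \<in> graph_edges E) = ((a, b) \<in> E)"
  by (auto simp: graph_edges_def)
lemma ge_sn: "((Some a, None) \<notin> graph_edges E)"
  by (auto simp: graph_edges_def)

lemma nbr_sym: "blowfish_nbr H d lab y z = blowfish_nbr H d lab z y"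
  unfolding blowfish_nbr_def by blast

lemma unit_ins: "u \<noteq> v \<Longrightarrow> unitv u (ins_idx v p) = unitv (del_idx v u) p"
  by (simp add: unitv_def ins_eq_iff)
lemma unit_ins_v: "unitv v (ins_idx v p) = 0"
  using ins_ne[of v p] by (auto simp: unitv_def)

lemma fwd:
  assumes vk: "v < k" and Esym: "sym E" and uk: "u < k" and wk: "w < k" and uw: "u \<noteq> w"
    and E: "(u, w) \<in> E" and D: "\<forall>p<k. y p - z p = unitv u p - unitv w p"
  shows "blowfish_nbr (collapse_edges E v) (k-1) (ins_idx v) (del_entry v y) (del_entry v z)"
proof -
  have D': "\<forall>p<k-1. del_entry v y p - del_entry v z p = unitv u (ins_idx v p) - unitv w (ins_idx v p)"
    using D ins_lt[OF vk] by (simp add: del_entry_def)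
  show ?thesis
  proof (cases "u = v")
    case True
    then have wv: "w \<noteq> v" using uw by simp
    have "\<forall>p<k-1. del_entry v y p - del_entry v z p = - unitv (del_idx v w) p"
      using D' True wv by (simp add: unit_ins unit_ins_v)
    then have "\<forall>p<k-1. del_entry v z p - del_entry v y p = unitv (del_idx v w) p"
      by (metis minus_diff_eq minus_minus)
    moreover have "(Some (ins_idx v (del_idx v w)), None) \<in> collapse_edges E v"
      using E True wv by (simp add: ce_sn ins_del)
    ultimately show ?thesis unfolding blowfish_nbr_def using del_lt[OF vk wk wv] by blast
  next
    case uv: False
    show ?thesis
    proof (cases "w = v")
      case True
      have "\<forall>p<k-1. del_entry v y p - del_entry v z p = unitv (del_idx v u) p"
        using D' True uv by (simp add: unit_ins unit_ins_v)
      moreover have "(Some (ins_idx v (del_idx v u)), None) \<in> collapse_edges E v"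
        using E True uv Esym by (simp add: ce_sn ins_del sym_def)
      ultimately show ?thesis unfolding blowfish_nbr_def using del_lt[OF vk uk uv] by blast
    next
      case wv: False
      have "\<forall>p<k-1. del_entry v y p - del_entry v z p = unitv (del_idx v u) p - unitv (del_idx v w) p"
        using D' wv uv by (simp add: unit_ins)
      moreover have "(Some (ins_idx v (del_idx v u)), Some (ins_idx v (del_idx v w))) \<in> collapse_edges E v"
        using E uv wv by (simp add: ce_ss ins_del)
      moreover have "del_idx v u \<noteq> del_idx v w" using uw uv wv by (metis ins_del)
      ultimately show ?thesis unfolding blowfish_nbr_def using del_lt[OF vk uk uv] del_lt[OF vk wk wv] by blast
    qed
  qed
qed

lemma diff_v:
  fixes y z :: "nat \<Rightarrow> real"
  assumes vk: "v < k" and S: "(\<Sum>j<k. y j) = (\<Sum>j<k. z j)"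
  shows "y v - z v = - (\<Sum>p<k-1. y (ins_idx v p) - z (ins_idx v p))"
  using S sum_split[OF vk, of y] sum_split[OF vk, of z]
    sum_subtractf[of "\<lambda>p. y (ins_idx v p)" "\<lambda>p. z (ins_idx v p)" "{..<k-1}"] by linarith

lemma bwd1:
  assumes vk: "v < k" and S: "(\<Sum>j<k. y j) = (\<Sum>j<k. z j)"
    and pk: "p < k-1" and qk: "q < k-1" and pq: "p \<noteq> q" and E: "(ins_idx v p, ins_idx v q) \<in> E"
    and D: "\<forall>p'<k-1. del_entry v y p' - del_entry v z p' = unitv p p' - unitv q p'"
  shows "blowfish_nbr (graph_edges E) k id y z"
proof -
  have "\<forall>j<k. y j - z j = unitv (ins_idx v p) j - unitv (ins_idx v q) j"
  proof (intro allI impI)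
    fix j assume jk: "j < k"
    show "y j - z j = unitv (ins_idx v p) j - unitv (ins_idx v q) j"
    proof (cases "j = v")
      case True
      have "(\<Sum>p'<k-1. y (ins_idx v p') - z (ins_idx v p')) = (\<Sum>p'<k-1. unitv p p' - unitv q p')"
        using D by (intro sum.cong) (auto simp: del_entry_def)
      also have "\<dots> = 0" using pk qk by (simp add: sum_subtractf unitv_def sum.delta')
      finally show ?thesis using diff_v[OF vk S] True
        using ins_ne[of v p] ins_ne[of v q] by (auto simp: unitv_def)
    next
      case False
      have "y j - z j = del_entry v y (del_idx v j) - del_entry v z (del_idx v j)"
        using False by (simp add: del_entry_def ins_del)
      also have "\<dots> = unitv p (del_idx v j) - unitv q (del_idx v j)"
        using D del_lt[OF vk jk False] by simp
      finally show ?thesis using False by (simp add: unitv_def ins_eq_iff[symmetric] eq_commute)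
    qed
  qed
  moreover have "ins_idx v p \<noteq> ins_idx v q" using pq by (metis del_ins)
  ultimately show ?thesis unfolding blowfish_nbr_def using E ins_lt[OF vk pk] ins_lt[OF vk qk]
    by (auto simp: ge_ss)
qed

lemma bwd2:
  assumes vk: "v < k" and S: "(\<Sum>j<k. y j) = (\<Sum>j<k. z j)" and Esym: "sym E"
    and pk: "p < k-1" and E: "(v, ins_idx v p) \<in> E"
    and D: "\<forall>p'<k-1. del_entry v y p' - del_entry v z p' = unitv p p'"
  shows "blowfish_nbr (graph_edges E) k id y z"
proof -
  have "\<forall>j<k. y j - z j = unitv (ins_idx v p) j - unitv v j"
  proof (intro allI impI)
    fix j assume jk: "j < k"
    show "y j - z j = unitv (ins_idx v p) j - unitv v j"
    proof (cases "j = v")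
      case True
      have "(\<Sum>p'<k-1. y (ins_idx v p') - z (ins_idx v p')) = (\<Sum>p'<k-1. unitv p p')"
        using D by (intro sum.cong) (auto simp: del_entry_def)
      also have "\<dots> = 1" using pk by (simp add: unitv_def sum.delta')
      finally show ?thesis using diff_v[OF vk S] True
        using ins_ne[of v p] ins_ne[of v q] by (auto simp: unitv_def)
    next
      case False
      have "y j - z j = del_entry v y (del_idx v j) - del_entry v z (del_idx v j)"
        using False by (simp add: del_entry_def ins_del)
      also have "\<dots> = unitv p (del_idx v j)"
        using D del_lt[OF vk jk False] by simp
      finally show ?thesis using False by (simp add: unitv_def ins_eq_iff[symmetric] eq_commute)
    qed
  qed
  moreover have "ins_idx v p \<noteq> v" by (rule ins_ne)
  moreover have "(ins_idx v p, v) \<in> E" using E Esym by (simp add: sym_def)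
  ultimately show ?thesis unfolding blowfish_nbr_def using ins_lt[OF vk pk] vk
    by (auto simp: ge_ss)
qed

theorem lemma4p9:
  fixes k m v :: nat and E :: "(nat \<times> nat) set" and W :: "nat \<Rightarrow> nat \<Rightarrow> real"
  assumes Edom: "E \<subseteq> {0..<k} \<times> {0..<k}"
      and Esym: "sym E"
      and Eirr: "\<forall>a. (a, a) \<notin> E"
      and Econn: "\<forall>a<k. \<forall>b<k. (a, b) \<in> E\<^sup>*"
      and vk: "v < k"
  shows "(\<exists>c :: real \<Rightarrow> nat \<Rightarrow> real. \<forall>x :: nat \<Rightarrow> real. \<forall>r<m.
            mulvec k W x r
              = mulvec (k - 1) (matmul k W (Dmat v)) (del_entry v x) r + c (\<Sum>j<k. x j) r)
       \<and> (\<forall>y z :: nat \<Rightarrow> real. (\<Sum>j<k. y j) = (\<Sum>j<k. z j) \<longrightarrow>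
            (blowfish_nbr (graph_edges E) k id y z
             \<longleftrightarrow> blowfish_nbr (collapse_edges E v) (k - 1) (ins_idx v) (del_entry v y) (del_entry v z)))"
proof (intro conjI allI impI)
  show "\<exists>c :: real \<Rightarrow> nat \<Rightarrow> real. \<forall>x :: nat \<Rightarrow> real. \<forall>r<m.
            mulvec k W x r
              = mulvec (k - 1) (matmul k W (Dmat v)) (del_entry v x) r + c (\<Sum>j<k. x j) r"
    by (rule exI[of _ "\<lambda>n r. n * W r v"]) (simp add: part1[OF vk])
next
  fix y z :: "nat \<Rightarrow> real" assume S: "(\<Sum>j<k. y j) = (\<Sum>j<k. z j)"
  show "blowfish_nbr (graph_edges E) k id y z
             \<longleftrightarrow> blowfish_nbr (collapse_edges E v) (k - 1) (ins_idx v) (del_entry v y) (del_entry v z)"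
  proof
    assume "blowfish_nbr (graph_edges E) k id y z"
    then obtain u w where uw: "u < k" "w < k" "u \<noteq> w" "(u, w) \<in> E"
      and D: "(\<forall>p<k. y p - z p = unitv u p - unitv w p) \<or> (\<forall>p<k. z p - y p = unitv u p - unitv w p)"
      unfolding blowfish_nbr_def by (auto simp: ge_ss ge_sn)
    from D show "blowfish_nbr (collapse_edges E v) (k - 1) (ins_idx v) (del_entry v y) (del_entry v z)"
    proof
      assume "\<forall>p<k. y p - z p = unitv u p - unitv w p"
      then show ?thesis using fwd[OF vk Esym uw] by blast
    next
      assume "\<forall>p<k. z p - y p = unitv u p - unitv w p"
      then show ?thesis using fwd[OF vk Esym uw] nbr_sym by metis
    qed
  next
    assume "blowfish_nbr (collapse_edges E v) (k - 1) (ins_idx v) (del_entry v y) (del_entry v z)"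
    then consider
      (a) p q where "p < k-1" "q < k-1" "p \<noteq> q" "(ins_idx v p, ins_idx v q) \<in> E"
        "(\<forall>p'<k-1. del_entry v y p' - del_entry v z p' = unitv p p' - unitv q p')
         \<or> (\<forall>p'<k-1. del_entry v z p' - del_entry v y p' = unitv p p' - unitv q p')"
    | (b) p where "p < k-1" "(v, ins_idx v p) \<in> E"
        "(\<forall>p'<k-1. del_entry v y p' - del_entry v z p' = unitv p p')
         \<or> (\<forall>p'<k-1. del_entry v z p' - del_entry v y p' = unitv p p')"
      unfolding blowfish_nbr_def by (auto simp: ce_ss ce_sn)
    then show "blowfish_nbr (graph_edges E) k id y z"
    proof cases
      case a
      then show ?thesis using bwd1[OF vk S a(1-4)] bwd1[OF vk S[symmetric] a(1-4)] nbr_sym by metis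
    next
      case b
      then show ?thesis using bwd2[OF vk S Esym b(1-2)] bwd2[OF vk S[symmetric] Esym b(1-2)] nbr_sym by metis
    qed
  qed
qed

end
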